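(* Let $\mathcal{P}$ be a finite poset with $p$ elements such that $\mathcal{C}(\mathcal{P})$ is simplicial. Then $\mathbf{M}_{\mathcal{P}}^{-1}$ maps $\mathcal{C}(\mathcal{P})$ bijectively onto $\mathbb{R}^p_+$.
   Context: The order cone $\mathcal{C}(\mathcal{P})\subset\mathbb{R}^{\mathcal{P}}$ is the set of functions $\mathbf{f}$ on $\mathcal{P}$ with $f_x\ge0$ for all $x$ and $f_x\le f_y$ whenever $x\preceq y$. A cone in $\mathbb{R}^p$ is simplicial if it is the conical hull of $p$ linearly independent vectors. With standard basis $\{\mathbf{e}_x\}$ of $\mathbb{R}^{\mathcal{P}}\cong\mathbb{R}^p$, the Möbius transform $\mathbf{M}_{\mathcal{P}}$ is the linear map with $\mathbf{M}_{\mathcal{P}}(\mathbf{e}_x)=\sum_{y:\,x\preceq y}\mathbf{e}_y$; $\mathbb{R}^p_+$ denotes the vectors with nonnegative entries. *)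

theory Defs
  imports "HOL-Analysis.Analysis"
begin

text \<open>The finite poset is a finite ordered type; functions on it are vectors of type (real, 'n) vec, i.e. real ^ 'n.\<close>

definition order_cone :: "(real, 'n::{finite,order}) vec set" where
  "order_cone = {f. (\<forall>x. 0 \<le> f $ x) \<and> (\<forall>x y. x \<le> y \<longrightarrow> f $ x \<le> f $ y)}"

definition simplicial :: "(real, 'n::finite) vec set \<Rightarrow> bool" where
  "simplicial C \<longleftrightarrow> (\<exists>B. finite B \<and> card B = CARD('n) \<and> independent B \<and> C = convex_cone hull B)"

text \<open>Moebius transform: M(e_x) = sum of e_y over y with x <= y, i.e. (M f)_y = sum of f_x over x <= y.\<close>
definition mobius :: "(real, 'n::{finite,order}) vec \<Rightarrow> (real, 'n) vec" where
  "mobius f = (\<chi> y. \<Sum>x\<in>{x. x \<le> y}. f $ x)"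

definition nonneg_orthant :: "(real, 'n::finite) vec set" where
  "nonneg_orthant = {f. \<forall>x. 0 \<le> f $ x}"

end

theory Submission
  imports Defs
begin

definition upv :: "'n::{finite,order} \<Rightarrow> (real, 'n) vec" where
  "upv x = (\<chi> y. if x \<le> y then 1 else 0)"

lemma mobius_axis: "mobius (axis x (t::real)) = t *\<^sub>R upv (x::'n::{finite,order})"
proof -
  have "(\<Sum>z\<in>{z. z \<le> y}. axis x t $ z) = (if x \<le> y then t else 0)" for y
    by (simp add: axis_def)
  then show ?thesis by (simp add: mobius_def upv_def vec_eq_iff)
qed

lemma linear_mobius: "linear (mobius :: (real, 'n::{finite,order}) vec \<Rightarrow> _)"
  by (rule linearI) (simp_all add: mobius_def vec_eq_iff sum.distrib sum_distrib_left)

lemma upv_in_cone: "upv x \<in> order_cone"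
  unfolding order_cone_def upv_def by (auto intro: order_trans)

lemma cone_scale: "f \<in> order_cone \<Longrightarrow> 0 \<le> c \<Longrightarrow> c *\<^sub>R f \<in> order_cone"
  unfolding order_cone_def by (auto intro: mult_left_mono)

lemma extremal:
  fixes w :: "'i \<Rightarrow> (real, 'n::{finite,order}) vec"
  assumes S: "finite S" and W: "\<And>i. i \<in> S \<Longrightarrow> w i \<in> order_cone"
    and sm: "sum w S = upv x" and i: "i \<in> S"
  shows "w i = (w i $ x) *\<^sub>R upv x"
proof -
  have nn: "\<And>j y. j \<in> S \<Longrightarrow> 0 \<le> w j $ y" using W unfolding order_cone_def by auto
  have mono: "\<And>j y z. j \<in> S \<Longrightarrow> y \<le> z \<Longrightarrow> w j $ y \<le> w j $ z"
    using W unfolding order_cone_def by auto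
  have sc: "\<And>y. (\<Sum>j\<in>S. w j $ y) = upv x $ y"
    by (simp only: sum_component[symmetric] sm)
  show ?thesis
  proof (subst vec_eq_iff, intro allI)
    fix y
    show "w i $ y = ((w i $ x) *\<^sub>R upv x) $ y"
    proof (cases "x \<le> y")
      case False
      have z: "(\<Sum>j\<in>S. w j $ y) = 0" using sc[of y] False by (simp add: upv_def)
      have "\<forall>j\<in>S. w j $ y = 0"
        using sum_nonneg_eq_0_iff[OF S, of "\<lambda>j. w j $ y"] nn z by blast
      then have "w i $ y = 0" using i by blast
      then show ?thesis using False by (simp add: upv_def)
    next
      case True
      have a: "(\<Sum>j\<in>S. w j $ y) = 1" using sc[of y] True by (simp add: upv_def)
      have b: "(\<Sum>j\<in>S. w j $ x) = 1" using sc[of x] by (simp add: upv_def)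
      have z: "(\<Sum>j\<in>S. w j $ y - w j $ x) = 0"
        using a b by (simp only: sum_subtractf)
      have "\<forall>j\<in>S. 0 \<le> w j $ y - w j $ x" using mono True by auto
      then have "\<forall>j\<in>S. w j $ y - w j $ x = 0"
        using sum_nonneg_eq_0_iff[OF S, of "\<lambda>j. w j $ y - w j $ x"] z by blast
      then have "w i $ y = w i $ x" using i by auto
      then show ?thesis using True by (simp add: upv_def)
    qed
  qed
qed

definition Kc :: "'a::real_vector set \<Rightarrow> 'a set" where
  "Kc B = {y. \<exists>c. (\<forall>b\<in>B. 0 \<le> c b) \<and> y = (\<Sum>b\<in>B. c b *\<^sub>R b)}"

lemma Kc_cone: "finite B \<Longrightarrow> convex_cone (Kc B)"
  unfolding convex_cone_iff
proof (intro conjI ballI allI impI)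
  show "0 \<in> Kc B" unfolding Kc_def by (rule CollectI, rule exI[of _ "\<lambda>_. 0"]) simp
next
  fix x y assume "x \<in> Kc B" "y \<in> Kc B"
  then obtain c d where "\<forall>b\<in>B. 0 \<le> c b" "x = (\<Sum>b\<in>B. c b *\<^sub>R b)"
     "\<forall>b\<in>B. 0 \<le> d b" "y = (\<Sum>b\<in>B. d b *\<^sub>R b)" unfolding Kc_def by auto
  then show "x + y \<in> Kc B" unfolding Kc_def
    by (intro CollectI exI[of _ "\<lambda>b. c b + d b"]) (simp add: sum.distrib scaleR_add_left)
next
  fix x and t :: real assume "x \<in> Kc B" "0 \<le> t"
  then obtain c where "\<forall>b\<in>B. 0 \<le> c b" "x = (\<Sum>b\<in>B. c b *\<^sub>R b)" unfolding Kc_def by auto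
  then show "t *\<^sub>R x \<in> Kc B" unfolding Kc_def using \<open>0 \<le> t\<close>
    by (intro CollectI exI[of _ "\<lambda>b. t * c b"]) (simp add: scaleR_sum_right)
qed

lemma Kc_sub: "finite B \<Longrightarrow> B \<subseteq> Kc B"
proof
  fix b assume "finite B" "b \<in> B"
  have "(\<Sum>z\<in>B. (if z = b then 1 else 0) *\<^sub>R z) = (\<Sum>z\<in>B. if z = b then b else 0)"
    by (rule sum.cong) auto
  also have "\<dots> = b" using \<open>finite B\<close> \<open>b \<in> B\<close> by (simp add: sum.delta)
  finally show "b \<in> Kc B" unfolding Kc_def
    by (intro CollectI exI[of _ "\<lambda>z. if z = b then 1 else 0"]) auto
qed

lemma mobius_inj: "inj (mobius :: (real, 'n::{finite,order}) vec \<Rightarrow> _)"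
proof (rule injI)
  fix f g :: "(real, 'n) vec" assume e: "mobius f = mobius g"
  define h where "h = f - g"
  have h0: "mobius h = 0" unfolding h_def by (simp add: linear_diff[OF linear_mobius] e)
  show "f = g"
  proof (rule ccontr)
    assume "f \<noteq> g"
    then have "{y. h $ y \<noteq> 0} \<noteq> {}" unfolding h_def by (auto simp: vec_eq_iff)
    then obtain y where y: "h $ y \<noteq> 0" and mn: "\<forall>z. h $ z \<noteq> 0 \<longrightarrow> z \<le> y \<longrightarrow> y = z"
      using finite_has_minimal[of "{y. h $ y \<noteq> 0}"] by auto
    have "(\<Sum>z\<in>{z. z \<le> y}. h $ z) = (\<Sum>z\<in>{z. z \<le> y}. if z = y then h $ y else 0)"
      by (rule sum.cong) (use mn in auto)
    also have "\<dots> = h $ y" by (simp add: sum.delta)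
    finally have "mobius h $ y \<noteq> 0" using y by (simp add: mobius_def)
    then show False using h0 by simp
  qed
qed

theorem lemma4:
  assumes "simplicial (order_cone :: (real, 'n::{finite,order}) vec set)"
  shows "bij_betw (inv (mobius :: (real, 'n) vec \<Rightarrow> (real, 'n) vec)) order_cone nonneg_orthant"
proof -
  let ?C = "order_cone :: (real, 'n) vec set"
  let ?N = "nonneg_orthant :: (real, 'n) vec set"
  have "\<exists>B. finite B \<and> card B = CARD('n) \<and> independent B \<and> ?C = convex_cone hull B"
    using assms unfolding simplicial_def .
  then obtain B where hB: "finite B \<and> card B = CARD('n) \<and> independent B \<and> ?C = convex_cone hull B"
    by (elim exE)
  then have fB: "finite B" and cB: "card B = CARD('n)" and iB: "independent B"
    and CB: "?C = convex_cone hull B" by simp_all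
  have BC: "B \<subseteq> ?C" unfolding CB by (rule hull_subset)
  have B0: "0 \<notin> B"
  proof
    assume "0 \<in> B"
    then have "dependent B" by (rule dependent_zero)
    with iB show False by simp
  qed
  have ex: "\<exists>b\<in>B. \<exists>t>0. b = t *\<^sub>R upv x" for x :: 'n
  proof -
    have "upv x \<in> Kc B"
      using upv_in_cone[of x] CB hull_minimal[where S=convex_cone, OF Kc_sub[OF fB] Kc_cone[OF fB]] by blast
    then obtain c where c0: "\<forall>b\<in>B. 0 \<le> c b" and ce: "upv x = (\<Sum>b\<in>B. c b *\<^sub>R b)"
      unfolding Kc_def by auto
    have wc: "\<And>b. b \<in> B \<Longrightarrow> c b *\<^sub>R b \<in> ?C" using BC c0 cone_scale by blast
    have "upv x $ x = 1" by (simp add: upv_def)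
    then have nz: "upv x \<noteq> 0" by auto
    have "\<exists>b\<in>B. c b \<noteq> 0"
    proof (rule ccontr)
      assume "\<not> (\<exists>b\<in>B. c b \<noteq> 0)"
      then have "\<forall>b\<in>B. c b *\<^sub>R b = 0" by simp
      then have "(\<Sum>b\<in>B. c b *\<^sub>R b) = 0" by (rule sum.neutral)
      then have "upv x = 0" using ce by simp
      then show False using nz by (rule notE[rotated])
    qed
    then obtain b where bB: "b \<in> B" and cb: "c b \<noteq> 0" by blast
    have eq: "c b *\<^sub>R b = ((c b *\<^sub>R b) $ x) *\<^sub>R upv x"
      using extremal[where S=B and w="\<lambda>b. c b *\<^sub>R b" and x=x and i=b, OF fB wc ce[symmetric] bB] .
    have hb: "b = (b $ x) *\<^sub>R upv x"
    proof -
      have "c b *\<^sub>R b = c b *\<^sub>R ((b $ x) *\<^sub>R upv x)" using eq by simp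
      then show ?thesis using cb by (simp only: scaleR_cancel_left) simp
    qed
    have nz2: "b $ x \<noteq> 0"
    proof
      assume "b $ x = 0"
      with hb have "b = 0" by simp
      with B0 bB show False by simp
    qed
    have "0 \<le> b $ x" using BC bB unfolding order_cone_def by auto
    with nz2 have pos: "0 < b $ x" by simp
    have "\<exists>t>0. b = t *\<^sub>R upv x" using pos hb by blast
    with bB show ?thesis by blast
  qed
  define phi where "phi x = (SOME b. b \<in> B \<and> (\<exists>t>0. b = t *\<^sub>R upv x))" for x :: 'n
  have phi: "phi x \<in> B \<and> (\<exists>t>0. phi x = t *\<^sub>R upv x)" for x
  proof -
    have "\<exists>b. b \<in> B \<and> (\<exists>t>0. b = t *\<^sub>R upv x)" using ex[of x] by (simp only: Bex_def)
    then show ?thesis unfolding phi_def by (rule someI_ex)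
  qed
  have le: "y \<le> x" if "t *\<^sub>R upv x = s *\<^sub>R upv y" "t > 0" for x y :: 'n and t s :: real
  proof -
    have "(t *\<^sub>R upv x) $ x = (s *\<^sub>R upv y) $ x" using that by simp
    then show ?thesis using \<open>t > 0\<close> by (auto simp: upv_def split: if_splits)
  qed
  have injphi: "inj phi"
  proof (rule injI)
    fix x y assume "phi x = phi y"
    moreover obtain t where "t > 0" "phi x = t *\<^sub>R upv x" using phi[of x] by blast
    moreover obtain s where "s > 0" "phi y = s *\<^sub>R upv y" using phi[of y] by blast
    ultimately have "t > 0" "s > 0" "t *\<^sub>R upv x = s *\<^sub>R upv y" by auto
    then show "x = y" using le[of t x s y] le[of s y t x] by auto
  qed
  have "phi ` UNIV = B"
  proof (rule card_subset_eq[OF fB])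
    show "phi ` UNIV \<subseteq> B" using phi by auto
    show "card (phi ` UNIV) = card B" using cB card_image[OF injphi] by simp
  qed
  have convN: "convex_cone ?N"
    unfolding convex_cone_iff nonneg_orthant_def by auto
  have convM: "convex_cone (mobius ` ?N)"
    using convex_cone_linear_image[of ?N mobius] convN linear_mobius by blast
  have BM: "B \<subseteq> mobius ` ?N"
  proof
    fix b assume "b \<in> B"
    then obtain x where "b = phi x" using \<open>phi ` UNIV = B\<close> by auto
    then obtain t where t: "t > 0" "b = t *\<^sub>R upv x" using phi by blast
    then have "b = mobius (axis x t)" by (simp add: mobius_axis)
    moreover have "axis x t \<in> ?N" using t by (simp add: nonneg_orthant_def axis_def)
    ultimately show "b \<in> mobius ` ?N" by blast
  qed
  have "?C \<subseteq> mobius ` ?N" using CB hull_minimal[where S=convex_cone, OF BM convM] by simp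
  moreover have "mobius ` ?N \<subseteq> ?C"
  proof
    fix f assume "f \<in> mobius ` ?N"
    then obtain g where g: "g \<in> ?N" "f = mobius g" by blast
    have "0 \<le> f $ y" for y using g
      by (auto simp: mobius_def nonneg_orthant_def intro: sum_nonneg)
    moreover have "f $ y \<le> f $ z" if "y \<le> z" for y z
    proof -
      have "{x. x \<le> y} \<subseteq> {x. x \<le> z}" using that by auto
      then show ?thesis using g
        by (auto simp: mobius_def nonneg_orthant_def intro!: sum_mono2)
    qed
    ultimately show "f \<in> ?C" unfolding order_cone_def by auto
  qed
  ultimately have CM: "?C = mobius ` ?N" by blast
  show ?thesis unfolding CM bij_betw_def
    by (simp add: inj_on_def image_image inv_f_f[OF mobius_inj])
qed

end
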